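(* Let $q\in L^1(\Omega;\mathbb{R}^n)$ with $q\not\equiv0$. Then the problem $\min_{\kappa_0\in\mathbb{A}^0}I_{\mathrm{loc}}(\kappa_0;q)$ admits an optimal solution given pointwise by $\hat\kappa_0(x)=\hat c_0|q(x)|$, where $\hat c_0=|\Omega|/\|q\|_{L^1(\Omega;\mathbb{R}^n)}$.
   Context: $\Omega\subset\mathbb{R}^n$ is a bounded open set. $\mathbb{A}^0=\{\kappa_0\in L^1(\Omega):\kappa_0\ge0\text{ a.e. in }\Omega,\ \int_\Omega\kappa_0\,dx\le|\Omega|\}$. $I_{\mathrm{loc}}(\kappa;q)=\frac12\int_\Omega\kappa^{-1}(x)|q(x)|^2dx$, with the convention that $\kappa^{-1}|q|^2=0$ where $\kappa=0$ and $q=0$, and $=+\infty$ where $\kappa=0$ and $q\ne0$. $|\cdot|$ denotes the Euclidean norm. *)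

theory Defs
  imports "HOL-Analysis.Analysis"
begin

definition A0 :: "('n::euclidean_space) set \<Rightarrow> ('n \<Rightarrow> real) set" where
  "A0 \<Omega> = {\<kappa>. integrable (lebesgue_on \<Omega>) \<kappa>
              \<and> (AE x in lebesgue_on \<Omega>. \<kappa> x \<ge> 0)
              \<and> integral\<^sup>L (lebesgue_on \<Omega>) \<kappa> \<le> measure lebesgue \<Omega>}"

definition loc_integrand :: "real \<Rightarrow> 'v::real_normed_vector \<Rightarrow> ennreal" where
  "loc_integrand k v =
     (if k = 0 then (if v = 0 then 0 else \<infinity>) else ennreal ((norm v)\<^sup>2 / k))"

definition I_loc :: "('n::euclidean_space) set \<Rightarrow> ('n \<Rightarrow> real) \<Rightarrow> ('n \<Rightarrow> 'v::real_normed_vector) \<Rightarrow> ennreal" where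
  "I_loc \<Omega> \<kappa> q = (1/2) * (\<integral>\<^sup>+ x. loc_integrand (\<kappa> x) (q x) \<partial>(lebesgue_on \<Omega>))"

end

theory Submission
  imports Defs
begin

lemma loc_meas:
  assumes "k \<in> borel_measurable M" "q \<in> borel_measurable M"
  shows "(\<lambda>x. loc_integrand ((k::'a\<Rightarrow>real) x) ((q::'a\<Rightarrow>'v::euclidean_space) x)) \<in> borel_measurable M"
  unfolding loc_integrand_def using assms by measurable

lemma pt_ineq:
  fixes v :: "'v::real_normed_vector"
  assumes "k \<ge> 0" "c > 0"
  shows "ennreal (2 * norm v / c) \<le> loc_integrand k v + ennreal (k / c\<^sup>2)"
proof (cases "k = 0")
  case True then show ?thesis by (simp add: loc_integrand_def)
next
  case False
  then have kp: "k > 0" using assms by simp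
  have "2 * norm v / c \<le> (norm v)\<^sup>2 / k + k / c\<^sup>2"
  proof -
    have "0 \<le> (norm v * c - k)\<^sup>2" by simp
    then have "2 * norm v * c * k \<le> (norm v)\<^sup>2 * c\<^sup>2 + k\<^sup>2"
      by (simp add: power2_eq_square algebra_simps)
    then have "(2 * norm v * c * k) / (k * c\<^sup>2) \<le> ((norm v)\<^sup>2 * c\<^sup>2 + k\<^sup>2) / (k * c\<^sup>2)"
      using kp assms by (intro divide_right_mono) auto
    then show ?thesis using kp assms by (simp add: field_simps power2_eq_square)
  qed
  then show ?thesis using False kp assms
    by (simp add: loc_integrand_def ennreal_plus[symmetric] del: ennreal_plus)
qed

theorem proposition2p1:
  fixes \<Omega> :: "(real ^ 'n) set" and q :: "real ^ 'n \<Rightarrow> real ^ 'n"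
  assumes "open \<Omega>" and "bounded \<Omega>"
    and "integrable (lebesgue_on \<Omega>) q"
    and "\<not> (AE x in lebesgue_on \<Omega>. q x = 0)"
  defines "c0 \<equiv> measure lebesgue \<Omega> / (\<integral>x. norm (q x) \<partial>(lebesgue_on \<Omega>))"
  shows "(\<lambda>x. c0 * norm (q x)) \<in> A0 \<Omega>
    \<and> (\<forall>\<kappa>\<in>A0 \<Omega>. I_loc \<Omega> (\<lambda>x. c0 * norm (q x)) q \<le> I_loc \<Omega> \<kappa> q)"
proof -
  let ?M = "lebesgue_on \<Omega>"
  define L where "L = (\<integral>x. norm (q x) \<partial>?M)"
  define m where "m = measure lebesgue \<Omega>"
  have lm: "\<Omega> \<in> lmeasurable" using assms(1,2) by (simp add: bounded_set_imp_lmeasurable borel_open)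
  have intn: "integrable ?M (\<lambda>x. norm (q x))" using assms(3) by simp
  have qm: "q \<in> borel_measurable ?M" using assms(3) by auto
  have L0: "L \<ge> 0" unfolding L_def by simp
  have Lp: "L > 0"
  proof (rule ccontr)
    assume "\<not> L > 0"
    then have "L = 0" using L0 by simp
    then have "AE x in ?M. norm (q x) = 0"
      using integral_nonneg_eq_0_iff_AE[OF intn] unfolding L_def by simp
    then show False using assms(4) by simp
  qed
  have mp: "m > 0"
  proof (rule ccontr)
    assume "\<not> m > 0"
    then have "m = 0" unfolding m_def using measure_nonneg[of lebesgue \<Omega>] by linarith
    then have "emeasure lebesgue \<Omega> = 0" using lm unfolding m_def
      by (simp add: emeasure_eq_measure2)
    then have "AE x in ?M. q x = 0"
      using lm by (intro AE_I[where N=\<Omega>]) (auto simp: emeasure_restrict_space)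
    then show False using assms(4) by simp
  qed
  have c0p: "c0 > 0" unfolding c0_def using Lp mp unfolding L_def m_def by simp
  define a where "a = L / c0"
  have a_eq: "m / c0\<^sup>2 = a" unfolding a_def c0_def using Lp mp
    unfolding L_def m_def by (simp add: field_simps power2_eq_square)
  have adm: "(\<lambda>x. c0 * norm (q x)) \<in> A0 \<Omega>"
    unfolding A0_def using intn c0p mp Lp
    by (simp add: c0_def L_def m_def)
  have Ihat: "I_loc \<Omega> (\<lambda>x. c0 * norm (q x)) q = (1/2) * ennreal a"
  proof -
    have "(\<integral>\<^sup>+ x. loc_integrand (c0 * norm (q x)) (q x) \<partial>?M) = (\<integral>\<^sup>+ x. ennreal (norm (q x) / c0) \<partial>?M)"
      using c0p by (intro nn_integral_cong) (auto simp: loc_integrand_def power2_eq_square)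
    also have "\<dots> = ennreal (\<integral>x. norm (q x) / c0 \<partial>?M)"
      using intn c0p by (intro nn_integral_eq_integral) auto
    also have "\<dots> = ennreal a" unfolding a_def L_def by simp
    finally show ?thesis unfolding I_loc_def by simp
  qed
  have opt: "I_loc \<Omega> (\<lambda>x. c0 * norm (q x)) q \<le> I_loc \<Omega> \<kappa> q" if k: "\<kappa> \<in> A0 \<Omega>" for \<kappa>
  proof -
    have ki: "integrable ?M \<kappa>" and kn: "AE x in ?M. \<kappa> x \<ge> 0"
      and kint: "integral\<^sup>L ?M \<kappa> \<le> m" using k unfolding A0_def m_def by auto
    have km: "\<kappa> \<in> borel_measurable ?M" using ki by auto
    define J where "J = (\<integral>\<^sup>+ x. loc_integrand (\<kappa> x) (q x) \<partial>?M)"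
    have "ennreal (2 * a) = (\<integral>\<^sup>+ x. ennreal (2 * norm (q x) / c0) \<partial>?M)"
    proof -
      have "(\<integral>\<^sup>+ x. ennreal (2 * norm (q x) / c0) \<partial>?M) = ennreal (\<integral>x. 2 * norm (q x) / c0 \<partial>?M)"
        using intn c0p by (intro nn_integral_eq_integral) auto
      also have "\<dots> = ennreal (2 * a)" unfolding a_def L_def by simp
      finally show ?thesis by simp
    qed
    also have "\<dots> \<le> (\<integral>\<^sup>+ x. loc_integrand (\<kappa> x) (q x) + ennreal (\<kappa> x / c0\<^sup>2) \<partial>?M)"
      using kn c0p by (intro nn_integral_mono_AE) (auto elim!: eventually_mono intro: pt_ineq)
    also have "\<dots> = J + (\<integral>\<^sup>+ x. ennreal (\<kappa> x / c0\<^sup>2) \<partial>?M)"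
      unfolding J_def using km qm by (intro nn_integral_add loc_meas) auto
    also have "(\<integral>\<^sup>+ x. ennreal (\<kappa> x / c0\<^sup>2) \<partial>?M) = ennreal (\<integral>x. \<kappa> x / c0\<^sup>2 \<partial>?M)"
      using ki kn c0p by (intro nn_integral_eq_integral) (auto elim!: eventually_mono)
    also have "(\<integral>x. \<kappa> x / c0\<^sup>2 \<partial>?M) \<le> a"
    proof -
      have "(\<integral>x. \<kappa> x / c0\<^sup>2 \<partial>?M) = integral\<^sup>L ?M \<kappa> / c0\<^sup>2" by simp
      also have "\<dots> \<le> m / c0\<^sup>2" using kint c0p by (intro divide_right_mono) auto
      finally show ?thesis using a_eq by simp
    qed
    finally have "ennreal (2 * a) \<le> J + ennreal a"
      by (metis add_left_mono ennreal_leI)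
    moreover have "ennreal (2 * a) = ennreal a + ennreal a"
      using Lp c0p unfolding a_def by (simp add: ennreal_plus[symmetric] del: ennreal_plus)
    ultimately have "ennreal a + ennreal a \<le> ennreal a + J" by (simp add: add.commute)
    then have "ennreal a \<le> J" by (simp add: ennreal_add_left_cancel_le)
    then have "(1/2) * ennreal a \<le> (1/2) * J" by (rule mult_left_mono) simp
    then show ?thesis unfolding Ihat by (simp add: I_loc_def J_def)
  qed
  show ?thesis using adm opt by blast
qed

end
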